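(* Let $G=(V,E)$ be a simple undirected graph with $V=[n]$ and let $k\ge 1$ be an integer. Let (P1) be the problem: maximize $\sum_{r\in[k]}\sum_{i\in[n]}Y^{rr}_{ii}$ over $Y\in\mathbb S^{n(k+1)}$ (with $n\times n$ blocks $Y^{rl}$, $r,l\in[k+1]$) subject to $Y^{rr}_{ij}=0$ for $\{i,j\}\in E$, $r\in[k]$; $\sum_{r\in[k+1]}Y^{rr}_{ii}=1$ for $i\in[n]$; $Y^{rl}_{ii}=0$ for $i\in[n]$, $r,l\in[k+1]$, $r\ne l$; $Y\ge 0$; $\begin{bmatrix}1&\mathrm{diag}(Y)^{\top}\\ \mathrm{diag}(Y)&Y\end{bmatrix}\succeq0$. Let (P2) be the problem: maximize $\sum_{r\in[k]}\sum_{i\in[n]}Y^{rr}_{ii}$ over $Y\in\mathbb S^{nk}$ (with $n\times n$ blocks $Y^{rl}$, $r,l\in[k]$) subject to $Y^{rr}_{ij}=0$ for $\{i,j\}\in E$, $r\in[k]$; $Y^{rl}_{ii}=0$ for $i\in[n]$, $r\ne l$; $Y\ge0$; $\begin{bmatrix}1&\mathrm{diag}(Y)^{\top}\\ \mathrm{diag}(Y)&Y\end{bmatrix}\succeq0$; together with the additional inequalities $1-\sum_{r\in[k]}Y^{rr}_{ii}-\sum_{r\in[k]}Y^{rr}_{jj}+\sum_{r,l\in[k]}Y^{rl}_{ij}\ge0$ for all $i,j\in[n]$, $i>j$, and $Y^{ll}_{ii}-\sum_{r\in[k]}Y^{rl}_{ij}\ge0$ for all $i\ne j$ in $[n]$ and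 $l\in[k]$. Then (P1) and (P2) are equivalent: every feasible solution of one yields a feasible solution of the other with the same objective value; in particular their optimal values coincide.
   Context: $\mathbb S^m$ is the space of real symmetric $m\times m$ matrices; $\mathrm{diag}(Y)$ is the vector of diagonal entries; $Y\ge0$ is entrywise nonnegativity; $\succeq0$ is positive semidefiniteness. *)

theory Defs
  imports Complex_Main
begin

(* Matrices whose rows/columns are indexed by pairs (r,i): block index r, vertex i.
   Entry  Y (r,i) (l,j)  is  Y^{rl}_{ij}  in the paper.  Indices are 0-based:
   blocks r < K, vertices i < n. *)

definition idx :: "nat \<Rightarrow> nat \<Rightarrow> (nat \<times> nat) set" where
  "idx K n = {..<K} \<times> {..<n}"

definition sym_on :: "'a set \<Rightarrow> ('a \<Rightarrow> 'a \<Rightarrow> real) \<Rightarrow> bool" where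
  "sym_on I M \<longleftrightarrow> (\<forall>a\<in>I. \<forall>b\<in>I. M a b = M b a)"

definition psd_on :: "'a set \<Rightarrow> ('a \<Rightarrow> 'a \<Rightarrow> real) \<Rightarrow> bool" where
  "psd_on I M \<longleftrightarrow> sym_on I M \<and>
     (\<forall>v. 0 \<le> (\<Sum>a\<in>I. \<Sum>b\<in>I. v a * M a b * v b))"

(* The bordered matrix [[1, diag(Y)^T],[diag(Y), Y]], indexed by None (the extra
   row/column) and Some (r,i). *)
definition bordered :: "((nat \<times> nat) \<Rightarrow> (nat \<times> nat) \<Rightarrow> real)
    \<Rightarrow> (nat \<times> nat) option \<Rightarrow> (nat \<times> nat) option \<Rightarrow> real" where
  "bordered Y x y = (case (x, y) of
       (None, None) \<Rightarrow> 1
     | (None, Some b) \<Rightarrow> Y b b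
     | (Some a, None) \<Rightarrow> Y a a
     | (Some a, Some b) \<Rightarrow> Y a b)"

definition bidx :: "nat \<Rightarrow> nat \<Rightarrow> (nat \<times> nat) option set" where
  "bidx K n = insert None (Some ` idx K n)"

definition simple_graph :: "nat \<Rightarrow> nat set set \<Rightarrow> bool" where
  "simple_graph n E \<longleftrightarrow> (\<forall>e\<in>E. \<exists>i j. i < n \<and> j < n \<and> i \<noteq> j \<and> e = {i, j})"

definition objective :: "nat \<Rightarrow> nat \<Rightarrow> ((nat \<times> nat) \<Rightarrow> (nat \<times> nat) \<Rightarrow> real) \<Rightarrow> real" where
  "objective n k Y = (\<Sum>r<k. \<Sum>i<n. Y (r,i) (r,i))"

(* feasibility for (P1): Y in S^{n(k+1)}, blocks r,l in [k+1] (0-based: r,l < k+1,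
   the last block being r = k) *)
definition feasible_P1 :: "nat \<Rightarrow> nat set set \<Rightarrow> nat \<Rightarrow> ((nat \<times> nat) \<Rightarrow> (nat \<times> nat) \<Rightarrow> real) \<Rightarrow> bool" where
  "feasible_P1 n E k Y \<longleftrightarrow>
     sym_on (idx (Suc k) n) Y \<and>
     (\<forall>r<k. \<forall>i<n. \<forall>j<n. {i, j} \<in> E \<longrightarrow> Y (r,i) (r,j) = 0) \<and>
     (\<forall>i<n. (\<Sum>r<Suc k. Y (r,i) (r,i)) = 1) \<and>
     (\<forall>i<n. \<forall>r<Suc k. \<forall>l<Suc k. r \<noteq> l \<longrightarrow> Y (r,i) (l,i) = 0) \<and>
     (\<forall>a\<in>idx (Suc k) n. \<forall>b\<in>idx (Suc k) n. 0 \<le> Y a b) \<and>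
     psd_on (bidx (Suc k) n) (bordered Y)"

definition feasible_P2 :: "nat \<Rightarrow> nat set set \<Rightarrow> nat \<Rightarrow> ((nat \<times> nat) \<Rightarrow> (nat \<times> nat) \<Rightarrow> real) \<Rightarrow> bool" where
  "feasible_P2 n E k Y \<longleftrightarrow>
     sym_on (idx k n) Y \<and>
     (\<forall>r<k. \<forall>i<n. \<forall>j<n. {i, j} \<in> E \<longrightarrow> Y (r,i) (r,j) = 0) \<and>
     (\<forall>i<n. \<forall>r<k. \<forall>l<k. r \<noteq> l \<longrightarrow> Y (r,i) (l,i) = 0) \<and>
     (\<forall>a\<in>idx k n. \<forall>b\<in>idx k n. 0 \<le> Y a b) \<and>
     psd_on (bidx k n) (bordered Y) \<and>
     (\<forall>i<n. \<forall>j<n. j < i \<longrightarrow>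
        0 \<le> 1 - (\<Sum>r<k. Y (r,i) (r,i)) - (\<Sum>r<k. Y (r,j) (r,j))
               + (\<Sum>r<k. \<Sum>l<k. Y (r,i) (l,j))) \<and>
     (\<forall>i<n. \<forall>j<n. i \<noteq> j \<longrightarrow> (\<forall>l<k.
        0 \<le> Y (l,i) (l,i) - (\<Sum>r<k. Y (r,i) (l,j))))"

end

theory Submission
  imports Defs
begin


definition quad :: "'a set \<Rightarrow> ('a \<Rightarrow> 'a \<Rightarrow> real) \<Rightarrow> ('a \<Rightarrow> real) \<Rightarrow> real" where
  "quad I M v = (\<Sum>a\<in>I. \<Sum>b\<in>I. v a * M a b * v b)"

lemma psd_on_quad: "psd_on I M \<longleftrightarrow> sym_on I M \<and> (\<forall>v. 0 \<le> quad I M v)"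
  by (simp add: psd_on_def quad_def)

lemma swap4:
  "(\<Sum>x\<in>I. \<Sum>y\<in>I. \<Sum>a\<in>J. \<Sum>b\<in>J. F a b x y) = (\<Sum>a\<in>J. \<Sum>b\<in>J. \<Sum>x\<in>I. \<Sum>y\<in>I. F a b x y)"
proof -
  have "(\<Sum>x\<in>I. \<Sum>y\<in>I. \<Sum>a\<in>J. \<Sum>b\<in>J. F a b x y) = (\<Sum>x\<in>I. \<Sum>a\<in>J. \<Sum>y\<in>I. \<Sum>b\<in>J. F a b x y)"
    by (rule sum.cong[OF refl], rule sum.swap)
  also have "\<dots> = (\<Sum>x\<in>I. \<Sum>a\<in>J. \<Sum>b\<in>J. \<Sum>y\<in>I. F a b x y)"
    by (rule sum.cong[OF refl], rule sum.cong[OF refl], rule sum.swap)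
  also have "\<dots> = (\<Sum>a\<in>J. \<Sum>x\<in>I. \<Sum>b\<in>J. \<Sum>y\<in>I. F a b x y)"
    by (rule sum.swap)
  also have "\<dots> = (\<Sum>a\<in>J. \<Sum>b\<in>J. \<Sum>x\<in>I. \<Sum>y\<in>I. F a b x y)"
    by (rule sum.cong[OF refl], rule sum.swap)
  finally show ?thesis .
qed

lemma swap3: "(\<Sum>a\<in>J. \<Sum>b\<in>J. \<Sum>c\<in>C. H a b c) = (\<Sum>c\<in>C. \<Sum>a\<in>J. \<Sum>b\<in>J. H a b c)"
proof -
  have "(\<Sum>a\<in>J. \<Sum>b\<in>J. \<Sum>c\<in>C. H a b c) = (\<Sum>a\<in>J. \<Sum>c\<in>C. \<Sum>b\<in>J. H a b c)"
    by (rule sum.cong[OF refl], rule sum.swap)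
  also have "\<dots> = (\<Sum>c\<in>C. \<Sum>a\<in>J. \<Sum>b\<in>J. H a b c)" by (rule sum.swap)
  finally show ?thesis .
qed

lemma quad_congr_eq:
  assumes "\<forall>a\<in>J. \<forall>b\<in>J. M' a b = (\<Sum>c\<in>C. w c * (\<Sum>x\<in>I. \<Sum>y\<in>I. A c a x * M x y * A c b y))"
  shows "quad J M' v = (\<Sum>c\<in>C. w c * quad I M (\<lambda>x. \<Sum>a\<in>J. v a * A c a x))"
proof -
  define G where "G c a b x y = w c * (v a * A c a x * M x y * (v b * A c b y))" for c a b x y
  have "quad J M' v = (\<Sum>a\<in>J. \<Sum>b\<in>J. v a * (\<Sum>c\<in>C. w c * (\<Sum>x\<in>I. \<Sum>y\<in>I. A c a x * M x y * A c b y)) * v b)"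
    unfolding quad_def using assms by (intro sum.cong refl) auto
  also have "\<dots> = (\<Sum>a\<in>J. \<Sum>b\<in>J. \<Sum>c\<in>C. \<Sum>x\<in>I. \<Sum>y\<in>I. G c a b x y)"
  proof (intro sum.cong refl)
    fix a b
    show "v a * (\<Sum>c\<in>C. w c * (\<Sum>x\<in>I. \<Sum>y\<in>I. A c a x * M x y * A c b y)) * v b = (\<Sum>c\<in>C. \<Sum>x\<in>I. \<Sum>y\<in>I. G c a b x y)"
      unfolding G_def sum_distrib_left sum_distrib_right by (simp add: mult_ac)
  qed
  also have "\<dots> = (\<Sum>c\<in>C. \<Sum>a\<in>J. \<Sum>b\<in>J. \<Sum>x\<in>I. \<Sum>y\<in>I. G c a b x y)"
    by (rule swap3)
  also have "\<dots> = (\<Sum>c\<in>C. \<Sum>x\<in>I. \<Sum>y\<in>I. \<Sum>a\<in>J. \<Sum>b\<in>J. G c a b x y)"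
    by (rule sum.cong[OF refl], rule swap4[symmetric])
  also have "\<dots> = (\<Sum>c\<in>C. w c * quad I M (\<lambda>x. \<Sum>a\<in>J. v a * A c a x))"
    unfolding quad_def G_def by (simp add: sum_distrib_left sum_distrib_right mult_ac)
  finally show ?thesis .
qed

lemma psd_congr:
  assumes "psd_on I M" "\<forall>c\<in>C. 0 \<le> w c"
    "\<forall>a\<in>J. \<forall>b\<in>J. M' a b = (\<Sum>c\<in>C. w c * (\<Sum>x\<in>I. \<Sum>y\<in>I. A c a x * M x y * A c b y))"
    "sym_on J M'"
  shows "psd_on J M'"
  unfolding psd_on_quad
proof (intro conjI allI)
  fix v
  show "0 \<le> quad J M' v" unfolding quad_congr_eq[OF assms(3)]
    using assms(1,2) unfolding psd_on_quad by (intro sum_nonneg mult_nonneg_nonneg) auto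
qed (rule assms(4))

lemma kernel:
  assumes "psd_on I M" "finite I" "quad I M v = 0" "a \<in> I"
  shows "(\<Sum>b\<in>I. M a b * v b) = 0"
proof -
  define x where "x = (\<Sum>b\<in>I. M a b * v b)"
  define m where "m = M a a"
  have sym: "\<And>p q. p \<in> I \<Longrightarrow> q \<in> I \<Longrightarrow> M p q = M q p" using assms(1) by (auto simp: psd_on_def sym_on_def)
  have q: "quad I M (\<lambda>b. v b + t * (if b = a then 1 else 0)) = 2 * t * x + t^2 * m" for t
  proof -
    define e where "e b = (if b = a then 1 else (0::real))" for b
    have d1: "(\<Sum>p\<in>I. e p * f p) = f a" for f :: "_ \<Rightarrow> real"
      using assms(2,4) by (simp add: e_def if_distrib[of "\<lambda>z. z * _"] sum.delta cong: if_cong)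
    have d2: "(\<Sum>p\<in>I. f p * e p) = f a" for f :: "_ \<Rightarrow> real"
      using d1[of f] by (simp add: mult.commute)
    have "quad I M (\<lambda>b. v b + t * e b) = (\<Sum>p\<in>I. \<Sum>q\<in>I. v p * M p q * v q + t * (e p * (M p q * v q)) + t * (v p * M p q * e q) + t^2 * (e p * (M p q * e q)))"
      unfolding quad_def by (intro sum.cong refl) (simp add: algebra_simps power2_eq_square)
    also have "\<dots> = quad I M v + t * (\<Sum>p\<in>I. e p * (\<Sum>q\<in>I. M p q * v q)) + t * (\<Sum>p\<in>I. v p * (\<Sum>q\<in>I. M p q * e q)) + t^2 * (\<Sum>p\<in>I. e p * (\<Sum>q\<in>I. M p q * e q))"
      unfolding quad_def by (simp add: sum.distrib sum_distrib_left mult_ac)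
    also have "\<dots> = quad I M v + t * x + t * (\<Sum>p\<in>I. v p * M p a) + t^2 * m"
      by (simp only: d1 d2 x_def m_def)
    also have "(\<Sum>p\<in>I. v p * M p a) = x" unfolding x_def using sym assms(4) by (auto intro!: sum.cong)
    finally show ?thesis using assms(3) by (simp add: e_def)
  qed
  have nn: "0 \<le> 2 * t * x + t^2 * m" for t using assms(1) q[of t] unfolding psd_on_quad by metis
  have "0 \<le> m" using nn[of 1] nn[of "-1"] by simp
  define t where "t = -x/(m+1)"
  have mt: "(m+1) * t = -x" unfolding t_def using \<open>0 \<le> m\<close> by simp
  have e0: "0 \<le> (m+1) * (2 * t * x + t^2 * m)" using nn[of t] \<open>0 \<le> m\<close> by simp
  have e1: "(m+1) * (2 * t * x + t^2 * m) = 2 * x * ((m+1) * t) + t * m * ((m+1) * t)"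
    by (simp add: algebra_simps power2_eq_square)
  have e2: "t * m * ((m+1) * t) = x^2 * m / (m+1)" using mt unfolding t_def using \<open>0 \<le> m\<close>
    by (simp add: power2_eq_square)
  have e3: "x^2 * m / (m+1) \<le> x^2" using \<open>0 \<le> m\<close> by (simp add: divide_le_eq mult_left_mono)
  have "0 \<le> -(x^2)" using e0 e1 e2 e3 mt by (simp add: power2_eq_square)
  hence "x = 0" by simp
  thus ?thesis by (simp add: x_def)
qed



lemma shift_eq_aux:
  fixes c c' l k :: nat
  assumes "c' \<le> c" "c < k" "(l + c) mod k = (l + c') mod k"
  shows "c = c'"
proof -
  have "k dvd (l + c) - (l + c')" using assms(1,3) by (subst mod_eq_dvd_iff_nat[symmetric]) auto
  hence "k dvd c - c'" by simp
  moreover have "c - c' < k" using assms by simp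
  ultimately have "c - c' = 0" using dvd_imp_le by (metis gr0I leD)
  thus ?thesis using assms(1) by simp
qed

lemma inj_shift: "inj_on (\<lambda>c::nat. (l + c) mod k) {..<k}"
  unfolding inj_on_def
  by (metis lessThan_iff nat_le_linear shift_eq_aux)

lemma shift_sum:
  assumes "0 < k"
  shows "(\<Sum>c<k. f ((l + c) mod k)) = (\<Sum>m<k. f (m::nat))"
proof -
  have "(\<lambda>c::nat. (l + c) mod k) ` {..<k} = {..<k}"
    by (rule endo_inj_surj) (use inj_shift assms in auto)
  hence "bij_betw (\<lambda>c::nat. (l + c) mod k) {..<k} {..<k}"
    using inj_shift by (simp add: bij_betw_def)
  thus ?thesis by (rule sum.reindex_bij_betw)
qed

lemma shift_sum':
  assumes "0 < k"
  shows "(\<Sum>c<k. f ((c + l) mod k)) = (\<Sum>m<k. f (m::nat))"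
  using shift_sum[OF assms, of f l] by (simp add: add.commute)

lemma sum_bidx: "(\<Sum>x\<in>bidx K n. f x) = f None + (\<Sum>r<K. \<Sum>j<n. f (Some (r,j)))"
proof -
  have "(\<Sum>x\<in>bidx K n. f x) = f None + (\<Sum>x\<in>Some ` idx K n. f x)"
    unfolding bidx_def by (subst sum.insert) (auto simp: idx_def)
  also have "(\<Sum>x\<in>Some ` idx K n. f x) = (\<Sum>p\<in>idx K n. f (Some p))"
    by (subst sum.reindex) auto
  also have "\<dots> = (\<Sum>r<K. \<Sum>j<n. f (Some (r,j)))"
    unfolding idx_def by (simp add: sum.cartesian_product)
  finally show ?thesis .
qed

definition kv :: "nat \<Rightarrow> (nat \<times> nat) option \<Rightarrow> real" where
  "kv i x = (case x of None \<Rightarrow> 1 | Some (r,j) \<Rightarrow> if j = i then -1 else 0)"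

lemma kv_sum: "i < n \<Longrightarrow> (\<Sum>x\<in>bidx K n. f x * kv i x) = f None - (\<Sum>r<K. f (Some (r,i)))"
  by (simp add: sum_bidx kv_def if_distrib[of "\<lambda>z. _ * z"] sum.delta sum_negf cong: if_cong)

lemma quad_alt: "quad I M v = (\<Sum>a\<in>I. (\<Sum>b\<in>I. M a b * v b) * v a)"
  unfolding quad_def by (simp add: sum_distrib_right sum_distrib_left mult_ac)

definition sd :: "nat \<Rightarrow> ((nat \<times> nat) \<Rightarrow> (nat \<times> nat) \<Rightarrow> real) \<Rightarrow> nat \<Rightarrow> real" where
  "sd K Y i = (\<Sum>r<K. Y (r,i) (r,i))"

definition TT :: "nat \<Rightarrow> ((nat \<times> nat) \<Rightarrow> (nat \<times> nat) \<Rightarrow> real) \<Rightarrow> nat \<Rightarrow> nat \<Rightarrow> real" where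
  "TT K Y i j = (\<Sum>r<K. \<Sum>l<K. Y (r,i) (l,j))"

lemma quad_kv:
  assumes "i < n"
  shows "quad (bidx K n) (bordered Y) (kv i) = 1 - sd K Y i - (\<Sum>l<K. Y (l,i) (l,i) - (\<Sum>r<K. Y (l,i) (r,i)))"
  unfolding quad_alt using assms
  by (simp add: kv_sum bordered_def sd_def sum_subtractf)

lemma rowdiag:
  fixes K :: nat
  assumes "\<forall>r<K. \<forall>l<K. r \<noteq> l \<longrightarrow> Y (r,i) (l,i) = 0" "l < K"
  shows "(\<Sum>r<K. Y (l,i) (r,i)) = Y (l,i) (l,i)" "(\<Sum>r<K. Y (r,i) (l,i)) = Y (l,i) (l,i)"
proof -
  have "(\<Sum>r<K. Y (l,i) (r,i)) = (\<Sum>r<K. if r = l then Y (l,i) (l,i) else 0)"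
    using assms by (intro sum.cong) auto
  thus "(\<Sum>r<K. Y (l,i) (r,i)) = Y (l,i) (l,i)" using assms(2) by (subst (asm) sum.delta) (auto simp del: sum.delta)
  have "(\<Sum>r<K. Y (r,i) (l,i)) = (\<Sum>r<K. if r = l then Y (l,i) (l,i) else 0)"
    using assms by (intro sum.cong) auto
  thus "(\<Sum>r<K. Y (r,i) (l,i)) = Y (l,i) (l,i)" using assms(2) by (subst (asm) sum.delta) (auto simp del: sum.delta)
qed

lemma TT_diag:
  assumes "\<forall>r<K. \<forall>l<K. r \<noteq> l \<longrightarrow> Y (r,i) (l,i) = 0"
  shows "TT K Y i i = sd K Y i"
  unfolding TT_def sd_def using rowdiag(1)[OF assms] by simp

lemma quad_kv_diag:
  assumes "i < n" "\<forall>r<K. \<forall>l<K. r \<noteq> l \<longrightarrow> Y (r,i) (l,i) = 0"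
  shows "quad (bidx K n) (bordered Y) (kv i) = 1 - sd K Y i"
  unfolding quad_kv[OF assms(1)] using rowdiag(1)[OF assms(2)] by simp

lemma TT_sym:
  assumes "\<forall>a\<in>idx K n. \<forall>b\<in>idx K n. Y a b = Y b a" "i < n" "j < n"
  shows "TT K Y j i = TT K Y i j"
proof -
  have "TT K Y j i = (\<Sum>r<K. \<Sum>l<K. Y (l,i) (r,j))"
    unfolding TT_def using assms by (intro sum.cong refl) (auto simp: idx_def)
  also have "\<dots> = TT K Y i j" unfolding TT_def by (rule sum.swap)
  finally show ?thesis .
qed

lemma bordered_sym:
  assumes "sym_on (idx K n) Y" shows "sym_on (bidx K n) (bordered Y)"
  using assms unfolding sym_on_def bidx_def bordered_def by auto

lemma psd_Ysym:
  assumes "psd_on (bidx K n) (bordered Y)" shows "sym_on (idx K n) Y"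
  using assms unfolding psd_on_def sym_on_def bidx_def bordered_def by force

lemma psd_nonneg_quad: "psd_on I M \<Longrightarrow> 0 \<le> quad I M v"
  by (simp add: psd_on_quad)

lemma kernel_bordered:
  assumes "psd_on (bidx K n) (bordered Y)" "i < n" "sd K Y i = 1"
    "\<forall>r<K. \<forall>l<K. r \<noteq> l \<longrightarrow> Y (r,i) (l,i) = 0" "a \<in> bidx K n"
  shows "bordered Y a None = (\<Sum>r<K. bordered Y a (Some (r,i)))"
proof -
  have fin: "finite (bidx K n)" unfolding bidx_def idx_def by simp
  have "quad (bidx K n) (bordered Y) (kv i) = 0"
    using quad_kv_diag[OF assms(2,4)] assms(3) by simp
  from kernel[OF assms(1) fin this assms(5)] show ?thesis
    using kv_sum[OF assms(2), of "bordered Y a" K] by simp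
qed



definition symz :: "nat \<Rightarrow> ((nat \<times> nat) \<Rightarrow> (nat \<times> nat) \<Rightarrow> real) \<Rightarrow> (nat \<times> nat) \<Rightarrow> (nat \<times> nat) \<Rightarrow> real" where
  "symz k Y a b = (\<Sum>c<k. Y ((fst a + c) mod k, snd a) ((fst b + c) mod k, snd b)) / real k"

lemma symz_simp: "symz k Y (r,i) (l,j) = (\<Sum>c<k. Y ((r + c) mod k, i) ((l + c) mod k, j)) / real k"
  by (simp add: symz_def)

lemma symz_diag: "0 < k \<Longrightarrow> symz k Y (l,j) (l,j) = sd k Y j / real k"
  unfolding symz_simp sd_def using shift_sum[of k "\<lambda>m. Y (m,j) (m,j)" l] by simp

lemma symz_rowsum:
  assumes "0 < k"
  shows "(\<Sum>r<k. symz k Y (r,i) (l,j)) = TT k Y i j / real k"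
proof -
  have "(\<Sum>r<k. symz k Y (r,i) (l,j)) = (\<Sum>r<k. \<Sum>c<k. Y ((r + c) mod k, i) ((l + c) mod k, j)) / real k"
    unfolding symz_simp by (simp add: sum_divide_distrib)
  also have "(\<Sum>r<k. \<Sum>c<k. Y ((r + c) mod k, i) ((l + c) mod k, j)) = (\<Sum>c<k. \<Sum>r<k. Y ((r + c) mod k, i) ((l + c) mod k, j))"
    by (rule sum.swap)
  also have "\<dots> = (\<Sum>c<k. \<Sum>r<k. Y (r, i) ((l + c) mod k, j))"
    apply (rule sum.cong[OF refl])
    subgoal for c by (rule shift_sum'[OF assms, of "\<lambda>m. Y (m,i) ((l + c) mod k, j)" c])
    done
  also have "\<dots> = (\<Sum>r<k. \<Sum>c<k. Y (r, i) ((l + c) mod k, j))"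
    by (rule sum.swap)
  also have "\<dots> = (\<Sum>r<k. \<Sum>m<k. Y (r, i) (m, j))"
    apply (rule sum.cong[OF refl])
    subgoal for r by (rule shift_sum[OF assms, of "\<lambda>m. Y (r,i) (m, j)" l])
    done
  finally show ?thesis unfolding TT_def .
qed

lemma symz_sd: "0 < k \<Longrightarrow> sd k (symz k Y) i = sd k Y i"
  unfolding sd_def[of k "symz k Y"] using symz_diag[of k Y _ i] by simp

lemma symz_TT: "0 < k \<Longrightarrow> TT k (symz k Y) i j = TT k Y i j"
proof -
  assume k: "0 < k"
  have "TT k (symz k Y) i j = (\<Sum>l<k. \<Sum>r<k. symz k Y (r,i) (l,j))"
    unfolding TT_def by (rule sum.swap)
  also have "\<dots> = (\<Sum>l<k. TT k Y i j / real k)" using symz_rowsum[OF k] by simp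
  finally show ?thesis using k by simp
qed

lemma objective_sd: "objective n k Y = (\<Sum>i<n. sd k Y i)"
  unfolding objective_def sd_def by (rule sum.swap)

lemma symz_objective: "0 < k \<Longrightarrow> objective n k (symz k Y) = objective n k Y"
  unfolding objective_sd using symz_sd by simp

definition sh :: "nat \<Rightarrow> nat \<Rightarrow> (nat \<times> nat) option \<Rightarrow> (nat \<times> nat) option" where
  "sh k c x = (case x of None \<Rightarrow> None | Some (r,i) \<Rightarrow> Some ((r + c) mod k, i))"

lemma delta2:
  assumes "finite I" "p \<in> I" "q \<in> I"
  shows "(\<Sum>x\<in>I. \<Sum>y\<in>I. (if x = p then 1 else 0) * M x y * (if y = q then 1 else 0)) = (M p q :: real)"
  using assms by (simp add: if_distrib[of "\<lambda>z. z * _"] if_distrib[of "\<lambda>z. _ * z"] sum.delta cong: if_cong)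

lemma psd_symz:
  assumes k: "0 < k" "k \<le> K" and P: "psd_on (bidx K n) (bordered Y)"
  shows "psd_on (bidx k n) (bordered (symz k Y))"
proof (rule psd_congr[OF P, where C = "{..<k}" and w = "\<lambda>_. 1 / real k"
      and A = "\<lambda>c a x. if x = sh k c a then 1 else 0"])
  have symY: "sym_on (idx K n) Y" by (rule psd_Ysym[OF P])
  have fin: "finite (bidx K n)" unfolding bidx_def idx_def by simp
  have mk: "(r + c) mod k < K" for r c using k by (meson mod_less_divisor less_le_trans)
  have shin: "sh k c a \<in> bidx K n" if "a \<in> bidx k n" for a c
    using that mk unfolding sh_def bidx_def idx_def by (auto split: option.splits)
  show "\<forall>a\<in>bidx k n. \<forall>b\<in>bidx k n. bordered (symz k Y) a b =
      (\<Sum>c<k. 1 / real k * (\<Sum>x\<in>bidx K n. \<Sum>y\<in>bidx K n.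
          (if x = sh k c a then 1 else 0) * bordered Y x y * (if y = sh k c b then 1 else 0)))"
  proof (intro ballI)
    fix a b assume a: "a \<in> bidx k n" and b: "b \<in> bidx k n"
    have "(\<Sum>c<k. 1 / real k * (\<Sum>x\<in>bidx K n. \<Sum>y\<in>bidx K n.
          (if x = sh k c a then 1 else 0) * bordered Y x y * (if y = sh k c b then 1 else 0)))
        = (\<Sum>c<k. bordered Y (sh k c a) (sh k c b)) / real k"
      using delta2[OF fin shin[OF a] shin[OF b]] by (simp add: sum_divide_distrib)
    also have "\<dots> = bordered (symz k Y) a b"
      using k by (cases a; cases b) (auto simp: sh_def bordered_def symz_def)
    finally show "bordered (symz k Y) a b = (\<Sum>c<k. 1 / real k * (\<Sum>x\<in>bidx K n. \<Sum>y\<in>bidx K n.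
          (if x = sh k c a then 1 else 0) * bordered Y x y * (if y = sh k c b then 1 else 0)))" by simp
  qed
  show "sym_on (bidx k n) (bordered (symz k Y))"
  proof (rule bordered_sym)
    show "sym_on (idx k n) (symz k Y)"
      unfolding sym_on_def symz_def
    proof (intro ballI)
      fix a b assume "a \<in> idx k n" "b \<in> idx k n"
      then show "(\<Sum>c<k. Y ((fst a + c) mod k, snd a) ((fst b + c) mod k, snd b)) / real k =
                 (\<Sum>c<k. Y ((fst b + c) mod k, snd b) ((fst a + c) mod k, snd a)) / real k"
        using symY mk unfolding sym_on_def idx_def
        by (intro arg_cong[where f = "\<lambda>x. x / real k"] sum.cong refl) auto
    qed
  qed
qed simp



lemma mod_shift_inj: "r < k \<Longrightarrow> l < k \<Longrightarrow> (r + c) mod k = (l + c) mod (k::nat) \<Longrightarrow> r = l"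
proof -
  assume a: "r < k" "l < k" "(r + c) mod k = (l + c) mod (k::nat)"
  hence "(c + r) mod k = (c + l) mod k" by (metis add.commute)
  thus "r = l" using inj_shift[of c k] a(1,2) unfolding inj_on_def by blast
qed

lemma P1_to_P2:
  assumes F: "feasible_P1 n E k Y" and k: "1 \<le> k"
  shows "feasible_P2 n E k (symz k Y) \<and> objective n k (symz k Y) = objective n k Y"
proof -
  have k0: "0 < k" using k by simp
  have symY: "\<forall>a\<in>idx (Suc k) n. \<forall>b\<in>idx (Suc k) n. Y a b = Y b a" using F by (simp add: feasible_P1_def sym_on_def)
  have edge: "\<forall>r<k. \<forall>i<n. \<forall>j<n. {i, j} \<in> E \<longrightarrow> Y (r,i) (r,j) = 0" using F by (simp add: feasible_P1_def)
  have sum1: "\<And>i. i < n \<Longrightarrow> sd (Suc k) Y i = 1" using F by (simp add: feasible_P1_def sd_def)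
  have d0: "\<forall>i<n. \<forall>r<Suc k. \<forall>l<Suc k. r \<noteq> l \<longrightarrow> Y (r,i) (l,i) = 0" using F by (simp add: feasible_P1_def)
  have nn: "\<And>r i l j. r < Suc k \<Longrightarrow> i < n \<Longrightarrow> l < Suc k \<Longrightarrow> j < n \<Longrightarrow> 0 \<le> Y (r,i) (l,j)"
    using F by (simp add: feasible_P1_def idx_def)
  have psd: "psd_on (bidx (Suc k) n) (bordered Y)" using F by (simp add: feasible_P1_def)
  have ker: "Y (l,j) (l,j) = (\<Sum>r<Suc k. Y (l,j) (r,i))" if "l < Suc k" "j < n" "i < n" for l j i
  proof -
    have "Some (l,j) \<in> bidx (Suc k) n" using that by (simp add: bidx_def idx_def)
    from kernel_bordered[OF psd that(3) sum1[OF that(3)] d0[THEN spec, THEN mp, OF that(3)] this]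
    show ?thesis by (simp add: bordered_def)
  qed
  have symY': "Y (r,i) (l,j) = Y (l,j) (r,i)" if "r < Suc k" "i < n" "l < Suc k" "j < n" for r i l j
    using symY that by (simp add: idx_def)
  have mk: "(r + c) mod k < k" for r c using k0 by simp
  have mk2: "(r + c) mod k < Suc k" for r c using mk less_SucI by blast
  have F1: "0 \<le> 1 - sd k Y i - sd k Y j + TT k Y i j" if "i < n" "j < n" for i j
  proof -
    have a: "Y (k,i) (k,i) = (\<Sum>l<k. Y (k,i) (l,j)) + Y (k,i) (k,j)" using ker[of k i j] that by simp
    have b: "sd k Y i + Y (k,i) (k,i) = 1" using sum1[OF that(1)] by (simp add: sd_def)
    have c: "(\<Sum>l<k. Y (k,i) (l,j)) = (\<Sum>l<k. Y (l,j) (l,j) - (\<Sum>r<k. Y (l,j) (r,i)))"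
    proof (intro sum.cong refl)
      fix l assume "l \<in> {..<k}"
      hence l: "l < k" by simp
      have "Y (l,j) (l,j) = (\<Sum>r<k. Y (l,j) (r,i)) + Y (l,j) (k,i)" using ker[of l j i] l that by simp
      moreover have "Y (k,i) (l,j) = Y (l,j) (k,i)" using symY' l that by simp
      ultimately show "Y (k,i) (l,j) = Y (l,j) (l,j) - (\<Sum>r<k. Y (l,j) (r,i))" by simp
    qed
    have d: "(\<Sum>l<k. Y (l,j) (l,j) - (\<Sum>r<k. Y (l,j) (r,i))) = sd k Y j - TT k Y j i"
      by (simp add: sum_subtractf sd_def TT_def)
    have e: "TT k Y j i = TT k Y i j"
      by (rule TT_sym[of k n]) (use symY that in \<open>auto simp: idx_def\<close>)
    have "0 \<le> Y (k,i) (k,j)" using nn that by simp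
    thus ?thesis using a b c d e by linarith
  qed
  have F2: "TT k Y i j \<le> sd k Y i" if "i < n" "j < n" for i j
  proof -
    have "(\<Sum>r<k. Y (m,i) (r,j)) \<le> Y (m,i) (m,i)" if "m < k" for m
      using ker[of m i j] nn[of m i k j] that \<open>i < n\<close> \<open>j < n\<close> by simp
    hence "(\<Sum>m<k. \<Sum>r<k. Y (m,i) (r,j)) \<le> (\<Sum>m<k. Y (m,i) (m,i))" by (intro sum_mono) simp
    thus ?thesis by (simp add: TT_def sd_def)
  qed
  let ?Z = "symz k Y"
  have "feasible_P2 n E k ?Z"
    unfolding feasible_P2_def
  proof (intro conjI allI impI ballI)
    show "sym_on (idx k n) ?Z"
      unfolding sym_on_def symz_def
    proof (intro ballI)
      fix a b assume "a \<in> idx k n" "b \<in> idx k n"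
      then show "(\<Sum>c<k. Y ((fst a + c) mod k, snd a) ((fst b + c) mod k, snd b)) / real k =
                 (\<Sum>c<k. Y ((fst b + c) mod k, snd b) ((fst a + c) mod k, snd a)) / real k"
        using symY' mk2 unfolding idx_def
        by (intro arg_cong[where f = "\<lambda>x. x / real k"] sum.cong refl) auto
    qed
  next
    fix r i j assume "r < k" "i < n" "j < n" "{i,j} \<in> E"
    thus "?Z (r,i) (r,j) = 0" using edge mk unfolding symz_simp by simp
  next
    fix i r l assume "i < n" "r < k" "l < k" "r \<noteq> l"
    thus "?Z (r,i) (l,i) = 0" unfolding symz_simp using d0 mk mod_shift_inj
      by (intro divide_eq_0_iff[THEN iffD2] disjI1 sum.neutral ballI) (metis less_SucI)
  next
    fix a b assume "a \<in> idx k n" "b \<in> idx k n"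
    thus "0 \<le> ?Z a b" unfolding symz_def using nn mk
      by (intro divide_nonneg_nonneg sum_nonneg) (auto simp: idx_def less_SucI)
  next
    show "psd_on (bidx k n) (bordered ?Z)" by (rule psd_symz[OF k0 _ psd]) simp
  next
    fix i j assume "i < n" "j < n" "j < i"
    thus "0 \<le> 1 - (\<Sum>r<k. ?Z (r,i) (r,i)) - (\<Sum>r<k. ?Z (r,j) (r,j)) + (\<Sum>r<k. \<Sum>l<k. ?Z (r,i) (l,j))"
      using F1[of i j] symz_sd[OF k0, of Y] symz_TT[OF k0, of Y] unfolding sd_def TT_def by simp
  next
    fix i j l assume "i < n" "j < n" "i \<noteq> j" "l < k"
    have "?Z (l,i) (l,i) - (\<Sum>r<k. ?Z (r,i) (l,j)) = (sd k Y i - TT k Y i j) / real k"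
      using symz_diag[OF k0] symz_rowsum[OF k0] by (simp add: diff_divide_distrib)
    thus "0 \<le> ?Z (l,i) (l,i) - (\<Sum>r<k. ?Z (r,i) (l,j))"
      using F2[OF \<open>i < n\<close> \<open>j < n\<close>] by simp
  qed
  thus ?thesis using symz_objective[OF k0] by simp
qed



definition ext :: "nat \<Rightarrow> ((nat \<times> nat) \<Rightarrow> (nat \<times> nat) \<Rightarrow> real) \<Rightarrow> (nat \<times> nat) \<Rightarrow> (nat \<times> nat) \<Rightarrow> real" where
  "ext k Z a b = (case a of (r,i) \<Rightarrow> case b of (l,j) \<Rightarrow>
     if r < k \<and> l < k then Z (r,i) (l,j)
     else if l < k then Z (l,j) (l,j) - (\<Sum>r'<k. Z (r',i) (l,j))
     else if r < k then Z (r,i) (r,i) - (\<Sum>l'<k. Z (r,i) (l',j))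
     else 1 - sd k Z i - sd k Z j + TT k Z i j)"

lemma ext_simp: "ext k Z (r,i) (l,j) =
     (if r < k \<and> l < k then Z (r,i) (l,j)
     else if l < k then Z (l,j) (l,j) - (\<Sum>r'<k. Z (r',i) (l,j))
     else if r < k then Z (r,i) (r,i) - (\<Sum>l'<k. Z (r,i) (l',j))
     else 1 - sd k Z i - sd k Z j + TT k Z i j)"
  by (simp add: ext_def)

definition Amat :: "nat \<Rightarrow> (nat \<times> nat) option \<Rightarrow> (nat \<times> nat) option \<Rightarrow> real" where
  "Amat k a x = (case a of None \<Rightarrow> (if x = None then 1 else 0)
     | Some (r,i) \<Rightarrow> if r < k then (if x = Some (r,i) then 1 else 0) else kv i x)"

definition app :: "nat \<Rightarrow> (nat \<times> nat) option \<Rightarrow> ((nat \<times> nat) option \<Rightarrow> real) \<Rightarrow> real" where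
  "app k a f = (case a of None \<Rightarrow> f None
     | Some (r,i) \<Rightarrow> if r < k then f (Some (r,i)) else f None - (\<Sum>r'<k. f (Some (r',i))))"

lemma fin_bidx[simp]: "finite (bidx K n)"
  unfolding bidx_def idx_def by simp

lemma Amat_sum:
  assumes "a \<in> bidx (Suc k) n"
  shows "(\<Sum>x\<in>bidx k n. Amat k a x * f x) = app k a f"
proof (cases a)
  case None
  have "None \<in> bidx k n" by (simp add: bidx_def)
  thus ?thesis using None unfolding Amat_def app_def
    by (simp add: if_distrib[of "\<lambda>z. z * _"] sum.delta bidx_def idx_def cong: if_cong)
next
  case (Some p)
  obtain r i where p: "p = (r,i)" by force
  have ri: "r < Suc k" "i < n" using assms Some p by (auto simp: bidx_def idx_def)
  show ?thesis
  proof (cases "r < k")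
    case True
    have "Some (r,i) \<in> bidx k n" using True ri by (simp add: bidx_def idx_def)
    thus ?thesis using Some p True unfolding Amat_def app_def
      by (simp add: if_distrib[of "\<lambda>z. z * _"] sum.delta cong: if_cong)
  next
    case False
    thus ?thesis using Some p kv_sum[OF ri(2), of f k] unfolding Amat_def app_def
      by (simp add: mult.commute)
  qed
qed

lemma Amat_congr:
  assumes "a \<in> bidx (Suc k) n" "b \<in> bidx (Suc k) n"
  shows "(\<Sum>x\<in>bidx k n. \<Sum>y\<in>bidx k n. Amat k a x * M x y * Amat k b y) = app k a (\<lambda>x. app k b (\<lambda>y. M x y))"
proof -
  have "(\<Sum>x\<in>bidx k n. \<Sum>y\<in>bidx k n. Amat k a x * M x y * Amat k b y) =
        (\<Sum>x\<in>bidx k n. Amat k a x * (\<Sum>y\<in>bidx k n. Amat k b y * M x y))"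
    by (simp add: sum_distrib_left mult_ac)
  also have "\<dots> = (\<Sum>x\<in>bidx k n. Amat k a x * app k b (\<lambda>y. M x y))"
    using Amat_sum[OF assms(2)] by simp
  also have "\<dots> = app k a (\<lambda>x. app k b (\<lambda>y. M x y))"
    using Amat_sum[OF assms(1)] by simp
  finally show ?thesis .
qed

lemma psd_ext:
  assumes P: "psd_on (bidx k n) (bordered Z)"
    and d0: "\<forall>i<n. \<forall>r<k. \<forall>l<k. r \<noteq> l \<longrightarrow> Z (r,i) (l,i) = 0"
    and S: "sym_on (idx (Suc k) n) (ext k Z)"
  shows "psd_on (bidx (Suc k) n) (bordered (ext k Z))"
proof (rule psd_congr[OF P, where C = "UNIV :: unit set" and w = "\<lambda>_. 1" and A = "\<lambda>_. Amat k"])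
  show "sym_on (bidx (Suc k) n) (bordered (ext k Z))" by (rule bordered_sym[OF S])
  show "\<forall>a\<in>bidx (Suc k) n. \<forall>b\<in>bidx (Suc k) n. bordered (ext k Z) a b =
       (\<Sum>c\<in>(UNIV :: unit set). 1 * (\<Sum>x\<in>bidx k n. \<Sum>y\<in>bidx k n. Amat k a x * bordered Z x y * Amat k b y))"
  proof (intro ballI)
    fix a b assume a: "a \<in> bidx (Suc k) n" and b: "b \<in> bidx (Suc k) n"
    have diag: "TT k Z i i = sd k Z i" if "i < n" for i
      using TT_diag[of k Z i] d0 that by blast
    have rd: "(\<Sum>r<k. Z (l,i) (r,i)) = Z (l,i) (l,i)" "(\<Sum>r<k. Z (r,i) (l,i)) = Z (l,i) (l,i)"
      if "i < n" "l < k" for i l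
      using rowdiag[of k Z i l] d0 that by auto
    have "bordered (ext k Z) a b = app k a (\<lambda>x. app k b (\<lambda>y. bordered Z x y))"
    proof (cases a)
      case None
      show ?thesis
      proof (cases b)
        case None2: None
        thus ?thesis using None by (simp add: bordered_def app_def)
      next
        case (Some q)
        then obtain l j where q: "b = Some (l,j)" by (cases q) auto
        have j: "j < n" using b q by (auto simp: bidx_def idx_def)
        show ?thesis using None q diag[OF j]
          by (simp add: bordered_def app_def ext_simp sd_def TT_def)
      qed
    next
      case (Some p)
      then obtain r i where p: "a = Some (r,i)" by (cases p) auto
      have i: "i < n" using a p by (auto simp: bidx_def idx_def)
      show ?thesis
      proof (cases b)
        case None
        thus ?thesis using p diag[OF i]
          by (simp add: bordered_def app_def ext_simp sd_def TT_def)
      next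
        case (Some q)
        then obtain l j where q: "b = Some (l,j)" by (cases q) auto
        have j: "j < n" using b q by (auto simp: bidx_def idx_def)
        show ?thesis using p q
          by (simp add: bordered_def app_def ext_simp sd_def TT_def sum_subtractf)
      qed
    qed
    thus "bordered (ext k Z) a b =
       (\<Sum>c\<in>(UNIV :: unit set). 1 * (\<Sum>x\<in>bidx k n. \<Sum>y\<in>bidx k n. Amat k a x * bordered Z x y * Amat k b y))"
      using Amat_congr[OF a b] by (simp add: UNIV_unit)
  qed
qed simp



lemma P2_to_P1:
  assumes F: "feasible_P2 n E k Y" and k: "1 \<le> k"
  shows "feasible_P1 n E k (ext k (symz k Y)) \<and> objective n k (ext k (symz k Y)) = objective n k Y"
proof -
  have k0: "0 < k" using k by simp
  have symY: "\<forall>a\<in>idx k n. \<forall>b\<in>idx k n. Y a b = Y b a" using F by (simp add: feasible_P2_def sym_on_def)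
  have edge: "\<forall>r<k. \<forall>i<n. \<forall>j<n. {i, j} \<in> E \<longrightarrow> Y (r,i) (r,j) = 0" using F by (simp add: feasible_P2_def)
  have d0: "\<forall>i<n. \<forall>r<k. \<forall>l<k. r \<noteq> l \<longrightarrow> Y (r,i) (l,i) = 0" using F by (simp add: feasible_P2_def)
  have nn: "\<And>r i l j. r < k \<Longrightarrow> i < n \<Longrightarrow> l < k \<Longrightarrow> j < n \<Longrightarrow> 0 \<le> Y (r,i) (l,j)"
    using F by (simp add: feasible_P2_def idx_def)
  have psd: "psd_on (bidx k n) (bordered Y)" using F by (simp add: feasible_P2_def)
  have E1: "\<And>i j. i < n \<Longrightarrow> j < n \<Longrightarrow> j < i \<Longrightarrow> 0 \<le> 1 - sd k Y i - sd k Y j + TT k Y i j"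
    using F by (simp add: feasible_P2_def sd_def TT_def)
  have E2: "\<And>i j l. i < n \<Longrightarrow> j < n \<Longrightarrow> i \<noteq> j \<Longrightarrow> l < k \<Longrightarrow> 0 \<le> Y (l,i) (l,i) - (\<Sum>r<k. Y (r,i) (l,j))"
    using F by (simp add: feasible_P2_def)
  have mk: "(r + c) mod k < k" for r c using k0 by simp
  let ?Z = "symz k Y"
  have psdZ: "psd_on (bidx k n) (bordered ?Z)" by (rule psd_symz[OF k0 le_refl psd])
  have symZ: "sym_on (idx k n) ?Z" by (rule psd_Ysym[OF psdZ])
  have symZ': "?Z (r,i) (l,j) = ?Z (l,j) (r,i)" if "r < k" "i < n" "l < k" "j < n" for r i l j
    using symZ that by (simp add: sym_on_def idx_def)
  have edgeZ: "?Z (r,i) (r,j) = 0" if "r < k" "i < n" "j < n" "{i,j} \<in> E" for r i j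
    using that edge mk unfolding symz_simp by simp
  have d0Z: "\<forall>i<n. \<forall>r<k. \<forall>l<k. r \<noteq> l \<longrightarrow> ?Z (r,i) (l,i) = 0"
  proof (intro allI impI)
    fix i r l assume "i < n" "r < k" "l < k" "r \<noteq> l"
    thus "?Z (r,i) (l,i) = 0" unfolding symz_simp using d0 mk mod_shift_inj
      by (intro divide_eq_0_iff[THEN iffD2] disjI1 sum.neutral ballI) metis
  qed
  have nnZ: "0 \<le> ?Z (r,i) (l,j)" if "r < k" "i < n" "l < k" "j < n" for r i l j
    unfolding symz_simp using nn mk that by (intro divide_nonneg_nonneg sum_nonneg) auto
  have sdZ: "sd k ?Z i = sd k Y i" for i by (rule symz_sd[OF k0])
  have TTZ: "TT k ?Z i j = TT k Y i j" for i j by (rule symz_TT[OF k0])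
  have diagZ: "TT k ?Z i i = sd k ?Z i" if "i < n" for i
    using TT_diag[of k ?Z i] d0Z that by blast
  have rdZ: "(\<Sum>r<k. ?Z (l,i) (r,i)) = ?Z (l,i) (l,i)" "(\<Sum>r<k. ?Z (r,i) (l,i)) = ?Z (l,i) (l,i)"
    if "i < n" "l < k" for i l
    using rowdiag[of k ?Z i l] d0Z that by auto
  have TTsymZ: "TT k ?Z j i = TT k ?Z i j" if "i < n" "j < n" for i j
    by (rule TT_sym[of k n]) (use symZ that in \<open>auto simp: sym_on_def\<close>)
  have TTsymY: "TT k Y j i = TT k Y i j" if "i < n" "j < n" for i j
    by (rule TT_sym[of k n]) (use symY that in auto)
  have F1Z: "0 \<le> 1 - sd k ?Z i - sd k ?Z j + TT k ?Z i j" if "i < n" "j < n" for i j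
  proof -
    consider "j < i" | "i < j" | "i = j" by linarith
    thus ?thesis
    proof cases
      case 1 thus ?thesis using E1[of i j] that sdZ TTZ by simp
    next
      case 2 thus ?thesis using E1[of j i] that sdZ TTZ TTsymY[of i j] by simp
    next
      case 3
      have "0 \<le> quad (bidx k n) (bordered ?Z) (kv i)" by (rule psd_nonneg_quad[OF psdZ])
      hence "0 \<le> 1 - sd k ?Z i" using quad_kv_diag[of i n k ?Z] d0Z that by simp
      thus ?thesis using 3 diagZ that by simp
    qed
  qed
  have NZ: "0 \<le> ?Z (l,j) (l,j) - (\<Sum>r<k. ?Z (r,i) (l,j))" if "i < n" "j < n" "l < k" for i j l
  proof (cases "i = j")
    case True thus ?thesis using rdZ(2)[of i l] that by simp
  next
    case False
    have "\<And>m. m \<in> {..<k} \<Longrightarrow> 0 \<le> Y (m,j) (m,j) - (\<Sum>r<k. Y (r,j) (m,i))"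
      using E2 False that by simp
    hence "0 \<le> (\<Sum>m<k. Y (m,j) (m,j) - (\<Sum>r<k. Y (r,j) (m,i)))" by (rule sum_nonneg)
    also have "\<dots> = sd k Y j - (\<Sum>m<k. \<Sum>r<k. Y (r,j) (m,i))" by (simp add: sum_subtractf sd_def)
    also have "(\<Sum>m<k. \<Sum>r<k. Y (r,j) (m,i)) = TT k Y j i" unfolding TT_def by (rule sum.swap)
    finally have "0 \<le> sd k Y j - TT k Y i j" using TTsymY that by simp
    moreover have "?Z (l,j) (l,j) - (\<Sum>r<k. ?Z (r,i) (l,j)) = (sd k Y j - TT k Y i j) / real k"
      using symz_diag[OF k0] symz_rowsum[OF k0] by (simp add: diff_divide_distrib)
    ultimately show ?thesis by simp
  qed
  let ?W = "ext k ?Z"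
  have symW: "sym_on (idx (Suc k) n) ?W"
    unfolding sym_on_def
  proof (intro ballI)
    fix a b assume a: "a \<in> idx (Suc k) n" and b: "b \<in> idx (Suc k) n"
    obtain r i where ai: "a = (r,i)" by force
    obtain l j where bj: "b = (l,j)" by force
    have ri: "r < Suc k" "i < n" "l < Suc k" "j < n" using a b ai bj by (auto simp: idx_def)
    consider "r < k" "l < k" | "\<not> r < k" "l < k" | "r < k" "\<not> l < k" | "\<not> r < k" "\<not> l < k" by blast
    thus "?W a b = ?W b a"
    proof cases
      case 1 thus ?thesis using ai bj ri symZ' by (simp add: ext_simp)
    next
      case 2 thus ?thesis using ai bj ri symZ' by (simp add: ext_simp)
    next
      case 3 thus ?thesis using ai bj ri symZ' by (simp add: ext_simp)
    next
      case 4 thus ?thesis using ai bj ri TTsymZ[of i j] by (simp add: ext_simp)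
    qed
  qed
  have "feasible_P1 n E k ?W"
    unfolding feasible_P1_def
  proof (intro conjI allI impI ballI)
    show "sym_on (idx (Suc k) n) ?W" by (rule symW)
  next
    fix r i j assume "r < k" "i < n" "j < n" "{i,j} \<in> E"
    thus "?W (r,i) (r,j) = 0" using edgeZ by (simp add: ext_simp)
  next
    fix i assume i: "i < n"
    have "(\<Sum>r<Suc k. ?W (r,i) (r,i)) = sd k ?Z i + ?W (k,i) (k,i)"
      by (simp add: ext_simp sd_def)
    also have "\<dots> = 1" using diagZ[OF i] by (simp add: ext_simp)
    finally show "(\<Sum>r<Suc k. ?W (r,i) (r,i)) = 1" .
  next
    fix i r l assume "i < n" "r < Suc k" "l < Suc k" "r \<noteq> l"
    thus "?W (r,i) (l,i) = 0" using d0Z rdZ[of i r] rdZ[of i l] by (auto simp: ext_simp)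
  next
    fix a b assume a: "a \<in> idx (Suc k) n" and b: "b \<in> idx (Suc k) n"
    obtain r i where ai: "a = (r,i)" by force
    obtain l j where bj: "b = (l,j)" by force
    have ri: "r < Suc k" "i < n" "l < Suc k" "j < n" using a b ai bj by (auto simp: idx_def)
    have NZ': "0 \<le> ?Z (r,i) (r,i) - (\<Sum>l'<k. ?Z (r,i) (l',j))" if "r < k"
    proof -
      have "(\<Sum>l'<k. ?Z (r,i) (l',j)) = (\<Sum>l'<k. ?Z (l',j) (r,i))"
        using symZ' that ri by (intro sum.cong refl) auto
      thus ?thesis using NZ[of j i r] that ri by simp
    qed
    show "0 \<le> ?W a b" using ai bj ri nnZ NZ[of i j l] NZ' F1Z[of i j] by (auto simp: ext_simp)
  next
    show "psd_on (bidx (Suc k) n) (bordered ?W)" by (rule psd_ext[OF psdZ d0Z symW])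
  qed
  moreover have "objective n k ?W = objective n k Y"
    using symz_objective[OF k0, of n Y] unfolding objective_def by (simp add: ext_simp)
  ultimately show ?thesis by simp
qed


theorem theorem2:
  fixes n k :: nat and E :: "nat set set"
  assumes "simple_graph n E" and "1 \<le> k"
  shows "(\<forall>Y. feasible_P1 n E k Y \<longrightarrow>
            (\<exists>Y'. feasible_P2 n E k Y' \<and> objective n k Y' = objective n k Y)) \<and>
         (\<forall>Y. feasible_P2 n E k Y \<longrightarrow>
            (\<exists>Y'. feasible_P1 n E k Y' \<and> objective n k Y' = objective n k Y)) \<and>
         Sup (objective n k ` {Y. feasible_P1 n E k Y}) =
         Sup (objective n k ` {Y. feasible_P2 n E k Y})"
proof -
  have A: "\<forall>Y. feasible_P1 n E k Y \<longrightarrow>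
            (\<exists>Y'. feasible_P2 n E k Y' \<and> objective n k Y' = objective n k Y)"
    using P1_to_P2[OF _ assms(2)] by blast
  have B: "\<forall>Y. feasible_P2 n E k Y \<longrightarrow>
            (\<exists>Y'. feasible_P1 n E k Y' \<and> objective n k Y' = objective n k Y)"
    using P2_to_P1[OF _ assms(2)] by blast
  have "objective n k ` {Y. feasible_P1 n E k Y} = objective n k ` {Y. feasible_P2 n E k Y}"
  proof
    show "objective n k ` {Y. feasible_P1 n E k Y} \<subseteq> objective n k ` {Y. feasible_P2 n E k Y}"
      using A by (auto simp: image_iff) (metis)
    show "objective n k ` {Y. feasible_P2 n E k Y} \<subseteq> objective n k ` {Y. feasible_P1 n E k Y}"
      using B by (auto simp: image_iff) (metis)
  qed
  thus ?thesis using A B by simp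
qed

end
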